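(* Let $r\ge2$, $k\ge3$ and let $\widehat{F}_k$ be an $r$-coloring of $K_k$. If $G$ is an $(r,\widehat{F}_k)$-extremal graph and $u,v\in V(G)$ are non-adjacent vertices, then the graph obtained from $G$ by deleting $v$ and adding a new vertex that is a twin of $u$ (non-adjacent to $u$ and with the same neighborhood as $u$ in $G-v$) is also $(r,\widehat{F}_k)$-extremal.
   Context: An $r$-coloring of a graph assigns colors from $\{1,\dots,r\}$ to edges (not necessarily properly). A copy of $\widehat{F}_k$ in a colored graph is a set of $k$ pairwise adjacent vertices admitting a bijection to $V(K_k)$ under which two edges have equal colors iff their images have equal colors in $\widehat{F}_k$; a coloring is $\widehat{F}_k$-free if it has no copy. $c_{r,\widehat{F}_k}(G)$ is the number of $\widehat{F}_k$-free $r$-colorings of $E(G)$, $c_{r,\widehat{F}_k}(n)$ its maximum over $n$-vertex graphs, and an $n$-vertex graph $G$ is $(r,\widehat{F}_k)$-extremal if $c_{r,\widehat{F}_k}(G)=c_{r,\widehat{F}_k}(n)$. *)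

theory Defs
  imports Main "HOL-Library.FuncSet"
begin

definition simple_graph :: "'a set \<Rightarrow> 'a set set \<Rightarrow> bool" where
  "simple_graph V E \<longleftrightarrow> finite V \<and> E \<subseteq> {e. e \<subseteq> V \<and> card e = 2}"

definition Kk_edges :: "nat \<Rightarrow> nat set set" where
  "Kk_edges k = {e. e \<subseteq> {0..<k} \<and> card e = 2}"

definition pattern_coloring :: "nat \<Rightarrow> nat \<Rightarrow> (nat set \<Rightarrow> nat) \<Rightarrow> bool" where
  "pattern_coloring r k F \<longleftrightarrow> F \<in> Kk_edges k \<rightarrow> {1..r}"

definition has_copy :: "nat \<Rightarrow> (nat set \<Rightarrow> nat) \<Rightarrow> 'a set set \<Rightarrow> ('a set \<Rightarrow> nat) \<Rightarrow> bool" where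
  "has_copy k F E c \<longleftrightarrow>
     (\<exists>S \<phi>. (\<forall>x\<in>S. \<forall>y\<in>S. x \<noteq> y \<longrightarrow> {x, y} \<in> E) \<and>
            bij_betw \<phi> S {0..<k} \<and>
            (\<forall>x\<in>S. \<forall>y\<in>S. \<forall>x'\<in>S. \<forall>y'\<in>S. x \<noteq> y \<longrightarrow> x' \<noteq> y' \<longrightarrow>
               (c {x, y} = c {x', y'} \<longleftrightarrow> F {\<phi> x, \<phi> y} = F {\<phi> x', \<phi> y'})))"

definition free_colorings :: "nat \<Rightarrow> nat \<Rightarrow> (nat set \<Rightarrow> nat) \<Rightarrow> 'a set set \<Rightarrow> ('a set \<Rightarrow> nat) set" where
  "free_colorings r k F E = {c \<in> E \<rightarrow>\<^sub>E {1..r}. \<not> has_copy k F E c}"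

definition c_graph :: "nat \<Rightarrow> nat \<Rightarrow> (nat set \<Rightarrow> nat) \<Rightarrow> 'a set set \<Rightarrow> nat" where
  "c_graph r k F E = card (free_colorings r k F E)"

definition c_num :: "nat \<Rightarrow> nat \<Rightarrow> (nat set \<Rightarrow> nat) \<Rightarrow> nat \<Rightarrow> nat" where
  "c_num r k F n = Max {c_graph r k F E | E :: nat set set. simple_graph {0..<n} E}"

definition extremal :: "nat \<Rightarrow> nat \<Rightarrow> (nat set \<Rightarrow> nat) \<Rightarrow> 'a set \<Rightarrow> 'a set set \<Rightarrow> bool" where
  "extremal r k F V E \<longleftrightarrow> simple_graph V E \<and> c_graph r k F E = c_num r k F (card V)"

text \<open>Delete v and add a twin of u; the new vertex reuses the name v
  (so the vertex set is unchanged).\<close>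
definition twin_replace :: "'a set set \<Rightarrow> 'a \<Rightarrow> 'a \<Rightarrow> 'a set set" where
  "twin_replace E u v = {e \<in> E. v \<notin> e} \<union> {{v, x} | x. {u, x} \<in> E \<and> x \<noteq> v}"

end

theory Submission
  imports Defs
begin
lemma copy_pull:
  assumes inj: "inj_on f V" and EV: "\<forall>e\<in>E. e \<subseteq> V" and k: "k \<ge> 2"
    and h: "has_copy k F E (restrict (\<lambda>e. c (f ` e)) E)"
  shows "has_copy k F ((`) f ` E) c"
proof -
  obtain S \<phi> where cl: "\<forall>x\<in>S. \<forall>y\<in>S. x \<noteq> y \<longrightarrow> {x, y} \<in> E" and bij: "bij_betw \<phi> S {0..<k}"
    and col: "\<forall>x\<in>S. \<forall>y\<in>S. \<forall>x'\<in>S. \<forall>y'\<in>S. x \<noteq> y \<longrightarrow> x' \<noteq> y' \<longrightarrow>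
               (restrict (\<lambda>e. c (f ` e)) E {x, y} = restrict (\<lambda>e. c (f ` e)) E {x', y'} \<longleftrightarrow> F {\<phi> x, \<phi> y} = F {\<phi> x', \<phi> y'})"
    using h unfolding has_copy_def by blast
  have fin: "finite S" using bij bij_betw_finite by blast
  have cS: "card S = k" using bij bij_betw_same_card by fastforce
  have SV: "S \<subseteq> V"
  proof
    fix x assume x: "x \<in> S"
    have "card (S - {x}) \<ge> 1" using cS k x fin by simp
    then obtain y where "y \<in> S" "y \<noteq> x"
      by (metis Diff_iff One_nat_def card.empty empty_iff insert_iff not_one_le_zero subsetI subset_antisym)
    then have "{x,y} \<in> E" using cl x by auto
    then show "x \<in> V" using EV by blast
  qed
  have injS: "inj_on f S" using inj SV inj_on_subset by blast
  define \<psi> where "\<psi> = \<phi> \<circ> the_inv_into S f"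
  have bij2: "bij_betw \<psi> (f ` S) {0..<k}" unfolding \<psi>_def
    using bij_betw_trans[OF bij_betw_the_inv_into[OF inj_on_imp_bij_betw[OF injS]] bij] .
  have psi: "\<psi> (f x) = \<phi> x" if "x \<in> S" for x
    using that injS by (simp add: \<psi>_def the_inv_into_f_f)
  have ce: "c {f x, f y} = restrict (\<lambda>e. c (f ` e)) E {x, y}" if "x \<in> S" "y \<in> S" "x \<noteq> y" for x y
  proof -
    have "{x,y} \<in> E" using cl that by blast
    then show ?thesis by simp
  qed
  have "\<forall>x2\<in>f`S. \<forall>y2\<in>f`S. x2 \<noteq> y2 \<longrightarrow> {x2, y2} \<in> (`) f ` E"
  proof (intro ballI impI)
    fix x2 y2 assume "x2 \<in> f`S" "y2 \<in> f`S" "x2 \<noteq> y2"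
    then obtain x y where "x\<in>S" "y\<in>S" "x2 = f x" "y2 = f y" by (auto simp: image_iff)
    then have "x \<noteq> y" using \<open>x2 \<noteq> y2\<close> by auto
    then have "{x,y} \<in> E" using cl \<open>x\<in>S\<close> \<open>y\<in>S\<close> by blast
    moreover have "f ` {x,y} = {x2,y2}" using \<open>x2 = f x\<close> \<open>y2 = f y\<close> by simp
    ultimately show "{x2, y2} \<in> (`) f ` E" by (metis image_eqI)
  qed
  moreover have "\<forall>x2\<in>f`S. \<forall>y2\<in>f`S. \<forall>x2'\<in>f`S. \<forall>y2'\<in>f`S. x2 \<noteq> y2 \<longrightarrow> x2' \<noteq> y2' \<longrightarrow>
               (c {x2, y2} = c {x2', y2'} \<longleftrightarrow> F {\<psi> x2, \<psi> y2} = F {\<psi> x2', \<psi> y2'})"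
  proof (intro ballI impI)
    fix x2 y2 x2' y2' assume "x2 \<in> f`S" "y2 \<in> f`S" "x2' \<in> f`S" "y2' \<in> f`S" "x2 \<noteq> y2" "x2' \<noteq> y2'"
    then obtain x y x' y' where "x\<in>S" "y\<in>S" "x2 = f x" "y2 = f y"
      "x'\<in>S" "y'\<in>S" "x2' = f x'" "y2' = f y'" by (auto simp: image_iff)
    moreover have "x \<noteq> y" "x' \<noteq> y'" using calculation \<open>x2 \<noteq> y2\<close> \<open>x2' \<noteq> y2'\<close> by auto
    ultimately show "c {x2, y2} = c {x2', y2'} \<longleftrightarrow> F {\<psi> x2, \<psi> y2} = F {\<psi> x2', \<psi> y2'}"
      using ce psi col by simp
  qed
  ultimately show ?thesis unfolding has_copy_def using bij2 by blast
qed

definition fib :: "'a set set \<Rightarrow> ('a set \<Rightarrow> nat) set \<Rightarrow> ('a set \<Rightarrow> nat) \<Rightarrow> ('a set \<Rightarrow> nat) set" where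
  "fib E0 X \<chi> = {\<alpha>\<in>X. restrict \<alpha> E0 = \<chi>}"

lemma finite_free: "finite E \<Longrightarrow> finite (free_colorings r k F E)"
  unfolding free_colorings_def
  by (rule finite_subset[of _ "E \<rightarrow>\<^sub>E {1..r}"]) (auto intro: finite_PiE)

lemma iso_map:
  assumes inj: "inj_on f V" and EV: "\<forall>e\<in>E. e \<subseteq> V" and k: "k \<ge> 2"
  shows "(\<lambda>c. restrict (\<lambda>e. c (f`e)) E) \<in> free_colorings r k F ((`) f ` E) \<rightarrow> free_colorings r k F E"
    and "inj_on (\<lambda>c. restrict (\<lambda>e. c (f`e)) E) (free_colorings r k F ((`) f ` E))"
proof -
  show "(\<lambda>c. restrict (\<lambda>e. c (f`e)) E) \<in> free_colorings r k F ((`) f ` E) \<rightarrow> free_colorings r k F E"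
  proof
    fix c assume c: "c \<in> free_colorings r k F ((`) f ` E)"
    then have c1: "c \<in> (`) f ` E \<rightarrow>\<^sub>E {1..r}" and c2: "\<not> has_copy k F ((`) f ` E) c"
      unfolding free_colorings_def by auto
    have "restrict (\<lambda>e. c (f`e)) E \<in> E \<rightarrow>\<^sub>E {1..r}"
      unfolding restrict_PiE_iff
    proof
      fix e assume "e \<in> E"
      then have "f ` e \<in> (`) f ` E" by (rule imageI)
      then show "c (f ` e) \<in> {1..r}" by (rule PiE_mem[OF c1])
    qed
    moreover have "\<not> has_copy k F E (restrict (\<lambda>e. c (f`e)) E)"
      using copy_pull[OF inj EV k] c2 by blast
    ultimately show "restrict (\<lambda>e. c (f`e)) E \<in> free_colorings r k F E"
      unfolding free_colorings_def by auto
  qed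
  show "inj_on (\<lambda>c. restrict (\<lambda>e. c (f`e)) E) (free_colorings r k F ((`) f ` E))"
  proof (rule inj_onI)
    fix c c' assume c: "c \<in> free_colorings r k F ((`) f ` E)" and c': "c' \<in> free_colorings r k F ((`) f ` E)"
      and eq: "restrict (\<lambda>e. c (f`e)) E = restrict (\<lambda>e. c' (f`e)) E"
    have c1: "c \<in> (`) f ` E \<rightarrow>\<^sub>E {1..r}" "c' \<in> (`) f ` E \<rightarrow>\<^sub>E {1..r}"
      using c c' unfolding free_colorings_def by auto
    show "c = c'"
    proof
      fix e2
      show "c e2 = c' e2"
      proof (cases "e2 \<in> (`) f ` E")
        case True
        then obtain e where e: "e \<in> E" "e2 = f ` e" by blast
        have "restrict (\<lambda>e. c (f`e)) E e = restrict (\<lambda>e. c' (f`e)) E e" using fun_cong[OF eq] .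
        then have "c (f`e) = c' (f`e)" using e(1) by simp
        then show ?thesis using e(2) by simp
      next
        case False
        show ?thesis using PiE_arb[OF c1(1) False] PiE_arb[OF c1(2) False] by simp
      qed
    qed
  qed
qed

lemma iso_fib:
  assumes inj: "inj_on f V" and EV: "\<forall>e\<in>E. e \<subseteq> V" and k: "k \<ge> 2" and fin: "finite E"
    and E0: "E0 \<subseteq> E" and fx: "\<forall>e\<in>E0. f ` e = e"
  shows "card (fib E0 (free_colorings r k F ((`) f ` E)) \<chi>) \<le> card (fib E0 (free_colorings r k F E) \<chi>)"
proof (rule card_inj_on_le)
  let ?h = "\<lambda>c. restrict (\<lambda>e. c (f`e)) E"
  show "inj_on ?h (fib E0 (free_colorings r k F ((`) f ` E)) \<chi>)"
    using iso_map(2)[OF inj EV k] unfolding fib_def by (rule inj_on_subset) auto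
  show "finite (fib E0 (free_colorings r k F E) \<chi>)"
    unfolding fib_def using finite_free[OF fin] by auto
  show "?h ` fib E0 (free_colorings r k F ((`) f ` E)) \<chi> \<subseteq> fib E0 (free_colorings r k F E) \<chi>"
  proof
    fix d assume "d \<in> ?h ` fib E0 (free_colorings r k F ((`) f ` E)) \<chi>"
    then obtain c where c: "c \<in> free_colorings r k F ((`) f ` E)" "restrict c E0 = \<chi>" and d: "d = ?h c"
      unfolding fib_def by blast
    have "d \<in> free_colorings r k F E" using iso_map(1)[OF inj EV k] c d by blast
    moreover have "restrict d E0 = restrict c E0"
    proof
      fix e show "restrict d E0 e = restrict c E0 e"
        using E0 fx d by (cases "e \<in> E0") auto
    qed
    ultimately show "d \<in> fib E0 (free_colorings r k F E) \<chi>" using c unfolding fib_def by simp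
  qed
qed

lemma iso_le:
  assumes inj: "inj_on f V" and EV: "\<forall>e\<in>E. e \<subseteq> V" and k: "k \<ge> 2" and fin: "finite E"
  shows "c_graph r k F ((`) f ` E) \<le> c_graph r k F E"
  unfolding c_graph_def
  by (rule card_inj_on_le[OF iso_map(2)[OF inj EV k] _ finite_free[OF fin]])
     (use iso_map(1)[OF inj EV k] in blast)

lemma iso_card:
  assumes inj: "inj_on f V" and EV: "\<forall>e\<in>E. e \<subseteq> V" and k: "k \<ge> 2" and fin: "finite E"
  shows "c_graph r k F ((`) f ` E) = c_graph r k F E"
proof (rule antisym)
  show "c_graph r k F ((`) f ` E) \<le> c_graph r k F E"
    using iso_le[OF inj EV k fin] .
  define g where "g = the_inv_into V f"
  have inj2: "inj_on g (f ` V)" unfolding g_def by (simp add: inj inj_on_the_inv_into)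
  have EV2: "\<forall>e\<in>(`) f ` E. e \<subseteq> f ` V" using EV by auto
  have bk: "(`) g ` ((`) f ` E) = E"
  proof -
    have ee: "g ` (f ` e) = e" if "e \<in> E" for e
    proof -
      have "e \<subseteq> V" using EV that by blast
      then have "\<And>x. x \<in> e \<Longrightarrow> g (f x) = x" unfolding g_def using inj
        by (meson subsetD the_inv_into_f_f)
      then have "(\<lambda>x. g (f x)) ` e = (\<lambda>x. x) ` e" by (rule image_cong[OF refl])
      then show ?thesis by (simp add: image_image)
    qed
    have "(\<lambda>e. g ` (f ` e)) ` E = (\<lambda>e. e) ` E" using ee by (rule image_cong[OF refl])
    then show ?thesis by (simp add: image_image)
  qed
  have "finite ((`) f ` E)" using fin by simp
  from iso_le[OF inj2 EV2 k this, of r F]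
  show "c_graph r k F E \<le> c_graph r k F ((`) f ` E)" unfolding bk .
qed



definition Dl :: "'a \<Rightarrow> 'a set set \<Rightarrow> 'a set set" where
  "Dl w E = {e\<in>E. w \<notin> e}"

lemma has_copy_restrict:
  "has_copy k F E1 (restrict c E1) \<longleftrightarrow>
   (\<exists>S \<phi>. (\<forall>x\<in>S. \<forall>y\<in>S. x \<noteq> y \<longrightarrow> {x, y} \<in> E1) \<and>
            bij_betw \<phi> S {0..<k} \<and>
            (\<forall>x\<in>S. \<forall>y\<in>S. \<forall>x'\<in>S. \<forall>y'\<in>S. x \<noteq> y \<longrightarrow> x' \<noteq> y' \<longrightarrow>
               (c {x, y} = c {x', y'} \<longleftrightarrow> F {\<phi> x, \<phi> y} = F {\<phi> x', \<phi> y'})))"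
  (is "?L \<longleftrightarrow> ?R")
proof
  assume ?L
  then obtain S \<phi> where a: "\<forall>x\<in>S. \<forall>y\<in>S. x \<noteq> y \<longrightarrow> {x, y} \<in> E1" and b: "bij_betw \<phi> S {0..<k}"
    and c: "\<forall>x\<in>S. \<forall>y\<in>S. \<forall>x'\<in>S. \<forall>y'\<in>S. x \<noteq> y \<longrightarrow> x' \<noteq> y' \<longrightarrow>
               (restrict c E1 {x, y} = restrict c E1 {x', y'} \<longleftrightarrow> F {\<phi> x, \<phi> y} = F {\<phi> x', \<phi> y'})"
    unfolding has_copy_def by blast
  have "\<forall>x\<in>S. \<forall>y\<in>S. \<forall>x'\<in>S. \<forall>y'\<in>S. x \<noteq> y \<longrightarrow> x' \<noteq> y' \<longrightarrow>
               (c {x, y} = c {x', y'} \<longleftrightarrow> F {\<phi> x, \<phi> y} = F {\<phi> x', \<phi> y'})"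
  proof (intro ballI impI)
    fix x y x' y' assume h: "x\<in>S" "y\<in>S" "x'\<in>S" "y'\<in>S" "x \<noteq> y" "x' \<noteq> y'"
    then have "{x,y} \<in> E1" "{x',y'} \<in> E1" using a by blast+
    moreover have "restrict c E1 {x, y} = restrict c E1 {x', y'} \<longleftrightarrow> F {\<phi> x, \<phi> y} = F {\<phi> x', \<phi> y'}"
      using c h by blast
    ultimately show "c {x, y} = c {x', y'} \<longleftrightarrow> F {\<phi> x, \<phi> y} = F {\<phi> x', \<phi> y'}" by simp
  qed
  then show ?R using a b by blast
next
  assume ?R
  then obtain S \<phi> where a: "\<forall>x\<in>S. \<forall>y\<in>S. x \<noteq> y \<longrightarrow> {x, y} \<in> E1" and b: "bij_betw \<phi> S {0..<k}"
    and c: "\<forall>x\<in>S. \<forall>y\<in>S. \<forall>x'\<in>S. \<forall>y'\<in>S. x \<noteq> y \<longrightarrow> x' \<noteq> y' \<longrightarrow>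
               (c {x, y} = c {x', y'} \<longleftrightarrow> F {\<phi> x, \<phi> y} = F {\<phi> x', \<phi> y'})"
    by blast
  have "\<forall>x\<in>S. \<forall>y\<in>S. \<forall>x'\<in>S. \<forall>y'\<in>S. x \<noteq> y \<longrightarrow> x' \<noteq> y' \<longrightarrow>
               (restrict c E1 {x, y} = restrict c E1 {x', y'} \<longleftrightarrow> F {\<phi> x, \<phi> y} = F {\<phi> x', \<phi> y'})"
  proof (intro ballI impI)
    fix x y x' y' assume h: "x\<in>S" "y\<in>S" "x'\<in>S" "y'\<in>S" "x \<noteq> y" "x' \<noteq> y'"
    then have "{x,y} \<in> E1" "{x',y'} \<in> E1" using a by blast+
    moreover have "c {x, y} = c {x', y'} \<longleftrightarrow> F {\<phi> x, \<phi> y} = F {\<phi> x', \<phi> y'}"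
      using c h by blast
    ultimately show "restrict c E1 {x, y} = restrict c E1 {x', y'} \<longleftrightarrow> F {\<phi> x, \<phi> y} = F {\<phi> x', \<phi> y'}" by simp
  qed
  then show ?L using a b unfolding has_copy_def by blast
qed

lemma copy_split:
  assumes uv: "u \<noteq> v" "{u, v} \<notin> E"
  shows "has_copy k F E c \<longleftrightarrow>
    has_copy k F (Dl v E) (restrict c (Dl v E)) \<or> has_copy k F (Dl u E) (restrict c (Dl u E))"
proof
  assume "has_copy k F E c"
  then obtain S \<phi> where a: "\<forall>x\<in>S. \<forall>y\<in>S. x \<noteq> y \<longrightarrow> {x, y} \<in> E" and b: "bij_betw \<phi> S {0..<k}"
    and c: "\<forall>x\<in>S. \<forall>y\<in>S. \<forall>x'\<in>S. \<forall>y'\<in>S. x \<noteq> y \<longrightarrow> x' \<noteq> y' \<longrightarrow>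
               (c {x, y} = c {x', y'} \<longleftrightarrow> F {\<phi> x, \<phi> y} = F {\<phi> x', \<phi> y'})"
    unfolding has_copy_def by blast
  show "has_copy k F (Dl v E) (restrict c (Dl v E)) \<or> has_copy k F (Dl u E) (restrict c (Dl u E))"
  proof (cases "v \<in> S")
    case False
    then have "\<forall>x\<in>S. \<forall>y\<in>S. x \<noteq> y \<longrightarrow> {x, y} \<in> Dl v E" using a unfolding Dl_def by auto
    then have "has_copy k F (Dl v E) (restrict c (Dl v E))" unfolding has_copy_restrict using b c by blast
    then show ?thesis ..
  next
    case True
    then have "u \<notin> S" using a uv by blast
    then have "\<forall>x\<in>S. \<forall>y\<in>S. x \<noteq> y \<longrightarrow> {x, y} \<in> Dl u E" using a unfolding Dl_def by auto
    then have "has_copy k F (Dl u E) (restrict c (Dl u E))" unfolding has_copy_restrict using b c by blast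
    then show ?thesis ..
  qed
next
  have sub: "\<And>w. Dl w E \<subseteq> E" unfolding Dl_def by auto
  have gen: "has_copy k F E c" if "has_copy k F (Dl w E) (restrict c (Dl w E))" for w
  proof -
    from that obtain S \<phi> where a: "\<forall>x\<in>S. \<forall>y\<in>S. x \<noteq> y \<longrightarrow> {x, y} \<in> Dl w E" and b: "bij_betw \<phi> S {0..<k}"
      and c: "\<forall>x\<in>S. \<forall>y\<in>S. \<forall>x'\<in>S. \<forall>y'\<in>S. x \<noteq> y \<longrightarrow> x' \<noteq> y' \<longrightarrow>
               (c {x, y} = c {x', y'} \<longleftrightarrow> F {\<phi> x, \<phi> y} = F {\<phi> x', \<phi> y'})"
      unfolding has_copy_restrict by blast
    have a2: "\<forall>x\<in>S. \<forall>y\<in>S. x \<noteq> y \<longrightarrow> {x, y} \<in> E" using a sub by blast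
    show ?thesis unfolding has_copy_def
      by (rule exI[of _ S], rule exI[of _ \<phi>]) (use a2 b c in blast)
  qed
  assume "has_copy k F (Dl v E) (restrict c (Dl v E)) \<or> has_copy k F (Dl u E) (restrict c (Dl u E))"
  then show "has_copy k F E c" using gen by blast
qed

lemma free_split:
  assumes uv: "u \<noteq> v" "{u, v} \<notin> E"
  shows "c \<in> free_colorings r k F E \<longleftrightarrow> c \<in> E \<rightarrow>\<^sub>E {1..r} \<and>
     restrict c (Dl v E) \<in> free_colorings r k F (Dl v E) \<and> restrict c (Dl u E) \<in> free_colorings r k F (Dl u E)"
proof -
  have h2: "c \<in> E \<rightarrow>\<^sub>E {1..r} \<Longrightarrow> restrict c (Dl w E) \<in> Dl w E \<rightarrow>\<^sub>E {1..r}" for w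
    unfolding Dl_def by auto
  have h1: "has_copy k F E c \<longleftrightarrow>
    has_copy k F (Dl v E) (restrict c (Dl v E)) \<or> has_copy k F (Dl u E) (restrict c (Dl u E))"
    by (rule copy_split[OF uv])
  show ?thesis unfolding free_colorings_def mem_Collect_eq using h1 h2[of v] h2[of u] by blast
qed


lemma count_lemma:
  assumes uv: "u \<noteq> v" "{u, v} \<notin> E" and c2: "\<forall>e\<in>E. card e = 2" and fin: "finite E"
  shows "c_graph r k F E = (\<Sum>\<chi>\<in>{e\<in>E. u \<notin> e \<and> v \<notin> e} \<rightarrow>\<^sub>E {1..r}.
     card (fib {e\<in>E. u \<notin> e \<and> v \<notin> e} (free_colorings r k F (Dl v E)) \<chi>) *
     card (fib {e\<in>E. u \<notin> e \<and> v \<notin> e} (free_colorings r k F (Dl u E)) \<chi>))"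
proof -
  define E0 where "E0 = {e\<in>E. u \<notin> e \<and> v \<notin> e}"
  define A where "A = free_colorings r k F (Dl v E)"
  define B where "B = free_colorings r k F (Dl u E)"
  define P where "P = {(\<alpha>, \<beta>). \<alpha> \<in> A \<and> \<beta> \<in> B \<and> restrict \<alpha> E0 = restrict \<beta> E0}"
  define h where "h = (\<lambda>c::'a set \<Rightarrow> nat. (restrict c (Dl v E), restrict c (Dl u E)))"
  have cover: "e \<in> Dl v E \<or> e \<in> Dl u E" if "e \<in> E" for e
  proof (rule ccontr)
    assume "\<not> ?thesis"
    then have "{u,v} \<subseteq> e" using that unfolding Dl_def by auto
    moreover have "card e = 2" "finite e" using c2 that card.infinite by fastforce+
    moreover have "card {u,v} = 2" using uv by simp
    ultimately have "e = {u,v}" by (metis card_subset_eq)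
    then show False using uv that by simp
  qed
  have E0v: "E0 \<subseteq> Dl v E" and E0u: "E0 \<subseteq> Dl u E" and Dint: "Dl v E \<inter> Dl u E = E0"
    unfolding E0_def Dl_def by auto
  have DE: "Dl w E \<subseteq> E" for w unfolding Dl_def by auto
  have AP: "\<alpha> \<in> Dl v E \<rightarrow>\<^sub>E {1..r}" if "\<alpha> \<in> A" for \<alpha> using that unfolding A_def free_colorings_def by auto
  have BP: "\<beta> \<in> Dl u E \<rightarrow>\<^sub>E {1..r}" if "\<beta> \<in> B" for \<beta> using that unfolding B_def free_colorings_def by auto
  have fs: "c \<in> free_colorings r k F E \<longleftrightarrow> c \<in> E \<rightarrow>\<^sub>E {1..r} \<and> restrict c (Dl v E) \<in> A \<and> restrict c (Dl u E) \<in> B" for c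
    unfolding A_def B_def using free_split[OF uv] by blast
  have inj: "inj_on h (free_colorings r k F E)"
  proof (rule inj_onI)
    fix c c' assume c: "c \<in> free_colorings r k F E" and c': "c' \<in> free_colorings r k F E" and eq: "h c = h c'"
    have cP: "c \<in> E \<rightarrow>\<^sub>E {1..r}" "c' \<in> E \<rightarrow>\<^sub>E {1..r}" using c c' fs by auto
    have e1: "restrict c (Dl v E) = restrict c' (Dl v E)" and e2: "restrict c (Dl u E) = restrict c' (Dl u E)"
      using eq unfolding h_def by auto
    show "c = c'"
    proof
      fix e show "c e = c' e"
      proof (cases "e \<in> E")
        case True
        have f1: "restrict c (Dl v E) e = restrict c' (Dl v E) e" using e1 by (rule fun_cong)
        have f2: "restrict c (Dl u E) e = restrict c' (Dl u E) e" using e2 by (rule fun_cong)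
        show ?thesis
        proof (cases "e \<in> Dl v E")
          case True2: True
          then show ?thesis using f1 by simp
        next
          case False
          then have "e \<in> Dl u E" using cover[OF True] by blast
          then show ?thesis using f2 by simp
        qed
      next
        case False
        show ?thesis using PiE_arb[OF cP(1) False] PiE_arb[OF cP(2) False] by simp
      qed
    qed
  qed
  have img: "h ` free_colorings r k F E = P"
  proof
    show "h ` free_colorings r k F E \<subseteq> P"
    proof
      fix p assume "p \<in> h ` free_colorings r k F E"
      then obtain c where c: "c \<in> free_colorings r k F E" and p: "p = h c" by blast
      have r: "restrict (restrict c (Dl v E)) E0 = restrict (restrict c (Dl u E)) E0"
        using E0v E0u by (simp add: Int_absorb1)
      have m: "restrict c (Dl v E) \<in> A" "restrict c (Dl u E) \<in> B" using c fs by blast+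
      show "p \<in> P" unfolding P_def p h_def using r m by simp
    qed
    show "P \<subseteq> h ` free_colorings r k F E"
    proof
      fix p assume "p \<in> P"
      then obtain \<alpha> \<beta> where p: "p = (\<alpha>, \<beta>)" and a: "\<alpha> \<in> A" and b: "\<beta> \<in> B"
        and ab: "restrict \<alpha> E0 = restrict \<beta> E0" unfolding P_def by blast
      define c where "c = restrict (\<lambda>e. if e \<in> Dl v E then \<alpha> e else \<beta> e) E"
      have ca: "restrict c (Dl v E) = \<alpha>"
      proof
        fix e show "restrict c (Dl v E) e = \<alpha> e"
        proof (cases "e \<in> Dl v E")
          case True
          then have "e \<in> E" using DE by blast
          then show ?thesis using True unfolding c_def by simp
        next
          case False
          then show ?thesis using PiE_arb[OF AP[OF a] False] by simp
        qed
      qed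
      have cb: "restrict c (Dl u E) = \<beta>"
      proof
        fix e show "restrict c (Dl u E) e = \<beta> e"
        proof (cases "e \<in> Dl u E")
          case True
          then have eE: "e \<in> E" using DE by blast
          show ?thesis
          proof (cases "e \<in> Dl v E")
            case True2: True
            then have "e \<in> E0" using True Dint by blast
            then have "\<alpha> e = \<beta> e" using fun_cong[OF ab, of e] by simp
            then show ?thesis using True True2 eE unfolding c_def by simp
          next
            case False
            then show ?thesis using True eE unfolding c_def by simp
          qed
        next
          case False
          then show ?thesis using PiE_arb[OF BP[OF b] False] by simp
        qed
      qed
      have cP: "c \<in> E \<rightarrow>\<^sub>E {1..r}"
        unfolding c_def restrict_PiE_iff
      proof
        fix e assume eE: "e \<in> E"
        show "(if e \<in> Dl v E then \<alpha> e else \<beta> e) \<in> {1..r}"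
        proof (cases "e \<in> Dl v E")
          case True
          then show ?thesis using PiE_mem[OF AP[OF a] True] by simp
        next
          case False
          then have "e \<in> Dl u E" using cover[OF eE] by blast
          then show ?thesis using PiE_mem[OF BP[OF b]] False by simp
        qed
      qed
      have "c \<in> E \<rightarrow>\<^sub>E {1..r} \<and> restrict c (Dl v E) \<in> A \<and> restrict c (Dl u E) \<in> B"
        using cP ca cb a b by simp
      then have "c \<in> free_colorings r k F E" using fs by blast
      moreover have "h c = p" unfolding h_def p using ca cb by simp
      ultimately show "p \<in> h ` free_colorings r k F E" by blast
    qed
  qed
  define C where "C = E0 \<rightarrow>\<^sub>E {1..r::nat}"
  have finE0: "finite E0" unfolding E0_def using fin by simp
  have finC: "finite C" unfolding C_def using finE0 by (simp add: finite_PiE)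
  have PU: "P = (\<Union>\<chi>\<in>C. fib E0 A \<chi> \<times> fib E0 B \<chi>)"
  proof
    show "P \<subseteq> (\<Union>\<chi>\<in>C. fib E0 A \<chi> \<times> fib E0 B \<chi>)"
    proof
      fix p assume "p \<in> P"
      then obtain \<alpha> \<beta> where p: "p = (\<alpha>, \<beta>)" and a: "\<alpha> \<in> A" and b: "\<beta> \<in> B"
        and ab: "restrict \<alpha> E0 = restrict \<beta> E0" unfolding P_def by blast
      have "restrict \<alpha> E0 \<in> C" unfolding C_def restrict_PiE_iff
        using PiE_mem[OF AP[OF a]] E0v by blast
      moreover have "\<alpha> \<in> fib E0 A (restrict \<alpha> E0)" "\<beta> \<in> fib E0 B (restrict \<alpha> E0)"
        unfolding fib_def using a b ab by simp_all
      ultimately show "p \<in> (\<Union>\<chi>\<in>C. fib E0 A \<chi> \<times> fib E0 B \<chi>)" unfolding p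
        by (intro UN_I[of "restrict \<alpha> E0"] SigmaI)
    qed
    show "(\<Union>\<chi>\<in>C. fib E0 A \<chi> \<times> fib E0 B \<chi>) \<subseteq> P"
    proof
      fix p assume "p \<in> (\<Union>\<chi>\<in>C. fib E0 A \<chi> \<times> fib E0 B \<chi>)"
      then obtain \<chi> \<alpha> \<beta> where p: "p = (\<alpha>, \<beta>)" "\<alpha> \<in> fib E0 A \<chi>" "\<beta> \<in> fib E0 B \<chi>" by blast
      then show "p \<in> P" unfolding fib_def P_def by simp
    qed
  qed
  have finA: "finite A" unfolding A_def by (rule finite_free) (use fin DE in \<open>blast intro: finite_subset\<close>)
  have finB: "finite B" unfolding B_def by (rule finite_free) (use fin DE in \<open>blast intro: finite_subset\<close>)
  have "card P = (\<Sum>\<chi>\<in>C. card (fib E0 A \<chi> \<times> fib E0 B \<chi>))"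
    unfolding PU
  proof (rule card_UN_disjoint[OF finC])
    have "fib E0 A i \<subseteq> A" "fib E0 B i \<subseteq> B" for i unfolding fib_def by blast+
    then show "\<forall>i\<in>C. finite (fib E0 A i \<times> fib E0 B i)" using finA finB
      by (meson finite_SigmaI finite_subset)
    show "\<forall>i\<in>C. \<forall>j\<in>C. i \<noteq> j \<longrightarrow> (fib E0 A i \<times> fib E0 B i) \<inter> (fib E0 A j \<times> fib E0 B j) = {}"
      unfolding fib_def by blast
  qed
  also have "\<dots> = (\<Sum>\<chi>\<in>C. card (fib E0 A \<chi>) * card (fib E0 B \<chi>))" by (simp add: card_cartesian_product)
  finally have "card P = (\<Sum>\<chi>\<in>C. card (fib E0 A \<chi>) * card (fib E0 B \<chi>))" .
  moreover have "c_graph r k F E = card P" unfolding c_graph_def using card_image[OF inj] img by simp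
  ultimately show ?thesis unfolding C_def E0_def A_def B_def by simp
qed


definition sw :: "'a \<Rightarrow> 'a \<Rightarrow> 'a \<Rightarrow> 'a" where
  "sw u v x = (if x = u then v else if x = v then u else x)"

lemma sw_sw[simp]: "sw u v (sw u v x) = x" unfolding sw_def by auto

lemma sw_inj: "inj_on (sw u v) V" by (rule inj_on_inverseI[where g="sw u v"]) simp

lemma sw_fix: assumes "u \<notin> e" "v \<notin> e" shows "sw u v ` e = e"
proof -
  have "\<And>x. x \<in> e \<Longrightarrow> sw u v x = x" using assms unfolding sw_def by auto
  then have "sw u v ` e = (\<lambda>x. x) ` e" by (rule image_cong[OF refl])
  then show ?thesis by simp
qed

lemma sw_img2: "sw u v ` (sw u v ` D) = D"
  by (simp add: image_image)

lemma card2_obtain: "card e = 2 \<Longrightarrow> u \<in> e \<Longrightarrow> \<exists>x. x \<noteq> u \<and> e = {u, x}"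
proof -
  assume a: "card e = 2" "u \<in> e"
  from a(1) obtain x y where xy: "e = {x,y}" "x \<noteq> y" by (meson card_2_iff)
  show ?thesis
  proof (cases "u = x")
    case True then show ?thesis using xy by (intro exI[of _ y]) auto
  next
    case False
    then have "u = y" using a(2) unfolding xy(1) by simp
    then show ?thesis using xy by (intro exI[of _ x]) auto
  qed
qed

lemma twin_lemma:
  assumes uv: "u \<noteq> v" "{u, v} \<notin> E" and c2: "\<forall>e\<in>E. card e = 2" and fin: "finite E" and k: "k \<ge> 2"
  shows "Dl v (twin_replace E u v) = Dl v E"
    and "{e\<in>twin_replace E u v. u \<notin> e \<and> v \<notin> e} = {e\<in>E. u \<notin> e \<and> v \<notin> e}"
    and "{u, v} \<notin> twin_replace E u v"
    and "\<forall>e\<in>twin_replace E u v. card e = 2"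
    and "finite (twin_replace E u v)"
    and "card (fib {e\<in>E. u \<notin> e \<and> v \<notin> e} (free_colorings r k F (Dl u (twin_replace E u v))) \<chi>)
         = card (fib {e\<in>E. u \<notin> e \<and> v \<notin> e} (free_colorings r k F (Dl v E)) \<chi>)"
proof -
  let ?E' = "twin_replace E u v"
  let ?N = "{{v, x} |x. {u, x} \<in> E \<and> x \<noteq> v}"
  have E'eq: "?E' = {e\<in>E. v \<notin> e} \<union> ?N" unfolding twin_replace_def ..
  have uu: "x \<noteq> u" if h: "{u, x} \<in> E" for x
  proof
    assume "x = u"
    then have "card {u, x} = 1" by simp
    then show False using c2 h by simp
  qed
  have Nv: "v \<in> e" if "e \<in> ?N" for e using that by blast
  show "Dl v ?E' = Dl v E" unfolding E'eq Dl_def using Nv by blast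
  show "{e\<in>?E'. u \<notin> e \<and> v \<notin> e} = {e\<in>E. u \<notin> e \<and> v \<notin> e}" unfolding E'eq using Nv by blast
  show "{u, v} \<notin> ?E'"
  proof
    assume "{u, v} \<in> ?E'"
    then have "{u, v} \<in> ?N" unfolding E'eq by blast
    then obtain x where x: "{u,v} = {v,x}" "{u,x} \<in> E" by blast
    have "u \<in> {v,x}" unfolding x(1)[symmetric] by blast
    then have "x = u" using uv by blast
    then show False using uu x(2) by blast
  qed
  have cN: "card e = 2" if "e \<in> ?N" for e
  proof -
    from that obtain x where "e = {v,x}" "x \<noteq> v" by blast
    then show ?thesis by simp
  qed
  show "\<forall>e\<in>?E'. card e = 2" unfolding E'eq using c2 cN by blast
  have "?N \<subseteq> (\<lambda>e. insert v (e - {u})) ` E"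
  proof
    fix e assume "e \<in> ?N"
    then obtain x where x: "e = {v,x}" "{u,x} \<in> E" by blast
    then have "x \<noteq> u" using uu by blast
    then have "e = insert v ({u,x} - {u})" using x by auto
    then show "e \<in> (\<lambda>e. insert v (e - {u})) ` E" using x by blast
  qed
  then have "finite ?N" using fin finite_subset by blast
  then show finE': "finite ?E'" unfolding E'eq using fin by simp
  define E0 where "E0 = {e\<in>E. u \<notin> e \<and> v \<notin> e}"
  have D2: "Dl u ?E' = (`) (sw u v) ` Dl v E"
  proof
    show "Dl u ?E' \<subseteq> (`) (sw u v) ` Dl v E"
    proof
      fix e assume e: "e \<in> Dl u ?E'"
      then have "e \<in> {e\<in>E. v \<notin> e} \<union> ?N" "u \<notin> e" unfolding Dl_def E'eq by blast+
      then have "(e \<in> E \<and> v \<notin> e \<and> u \<notin> e) \<or> e \<in> ?N" by blast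
      then show "e \<in> (`) (sw u v) ` Dl v E"
      proof
        assume h: "e \<in> E \<and> v \<notin> e \<and> u \<notin> e"
        then have "sw u v ` e = e" using sw_fix[of u e v] by blast
        moreover have "e \<in> Dl v E" using h unfolding Dl_def by blast
        ultimately show ?thesis by (intro image_eqI[where x=e]) auto
      next
        assume "e \<in> ?N"
        then obtain x where x: "e = {v,x}" "{u,x} \<in> E" "x \<noteq> v" by blast
        then have "x \<noteq> u" using uu by blast
        then have "sw u v ` {u,x} = e" using x by (simp add: sw_def insert_commute)
        moreover have "{u,x} \<in> Dl v E" using x uv unfolding Dl_def by blast
        ultimately show ?thesis by (intro image_eqI[where x="{u,x}"]) auto
      qed
    qed
    show "(`) (sw u v) ` Dl v E \<subseteq> Dl u ?E'"
    proof
      fix e2 assume "e2 \<in> (`) (sw u v) ` Dl v E"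
      then obtain e where e: "e \<in> E" "v \<notin> e" "e2 = sw u v ` e" unfolding Dl_def by blast
      show "e2 \<in> Dl u ?E'"
      proof (cases "u \<in> e")
        case False
        then have "e2 = e" using e sw_fix[of u e v] by simp
        then have "e2 \<in> {e\<in>E. v \<notin> e}" "u \<notin> e2" using e False by blast+
        then show ?thesis unfolding Dl_def E'eq by blast
      next
        case True
        have ce: "card e = 2" using c2 e(1) by blast
        obtain x where x: "x \<noteq> u" "e = {u,x}" using card2_obtain[OF ce True] by blast
        then have xv: "x \<noteq> v" using e(2) by blast
        then have "e2 = {v,x}" using e(3) x by (simp add: sw_def insert_commute)
        moreover have "{v,x} \<in> ?N" using x e(1) xv by blast
        moreover have "u \<notin> {v,x}" using x uv by blast
        ultimately show ?thesis unfolding Dl_def E'eq by blast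
      qed
    qed
  qed
  have E0v: "E0 \<subseteq> Dl v E" unfolding E0_def Dl_def by blast
  have fx: "\<forall>e\<in>E0. sw u v ` e = e"
  proof
    fix e assume "e \<in> E0"
    then have "u \<notin> e" "v \<notin> e" unfolding E0_def by blast+
    then show "sw u v ` e = e" by (rule sw_fix)
  qed
  have finD: "finite (Dl v E)" using fin unfolding Dl_def by simp
  have UV: "\<forall>e\<in>X. e \<subseteq> UNIV" for X :: "'a set set" by simp
  have le1: "card (fib E0 (free_colorings r k F ((`) (sw u v) ` Dl v E)) \<chi>) \<le> card (fib E0 (free_colorings r k F (Dl v E)) \<chi>)"
    by (rule iso_fib[OF sw_inj UV k finD E0v fx])
  have E0v2: "E0 \<subseteq> (`) (sw u v) ` Dl v E"
  proof
    fix e assume e: "e \<in> E0"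
    then have "sw u v ` e = e" using fx by blast
    moreover have "e \<in> Dl v E" using e E0v by blast
    ultimately show "e \<in> (`) (sw u v) ` Dl v E" by (intro image_eqI[where x=e]) auto
  qed
  have finD2: "finite ((`) (sw u v) ` Dl v E)" using finD by (rule finite_imageI)
  have le2: "card (fib E0 (free_colorings r k F ((`) (sw u v) ` ((`) (sw u v) ` Dl v E))) \<chi>) \<le> card (fib E0 (free_colorings r k F ((`) (sw u v) ` Dl v E)) \<chi>)"
    by (rule iso_fib[OF sw_inj UV k finD2 E0v2 fx])
  have ii: "(`) (sw u v) ` ((`) (sw u v) ` Dl v E) = Dl v E" 
  proof -
    have "(`) (sw u v) ` ((`) (sw u v) ` Dl v E) = (\<lambda>e. sw u v ` (sw u v ` e)) ` Dl v E" by (rule image_image)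
    also have "\<dots> = (\<lambda>e. e) ` Dl v E" by (simp only: sw_img2)
    finally show ?thesis by simp
  qed
  have "card (fib E0 (free_colorings r k F ((`) (sw u v) ` Dl v E)) \<chi>) = card (fib E0 (free_colorings r k F (Dl v E)) \<chi>)"
    using le1 le2 unfolding ii by (rule antisym)
  then show "card (fib E0 (free_colorings r k F (Dl u ?E')) \<chi>) = card (fib E0 (free_colorings r k F (Dl v E)) \<chi>)"
    unfolding D2 .
qed


lemma le_cnum:
  fixes E2 :: "'a set set"
  assumes sg: "simple_graph V E2" and k: "k \<ge> 2"
  shows "c_graph r k F E2 \<le> c_num r k F (card V)"
proof -
  have finV: "finite V" using sg unfolding simple_graph_def by blast
  have sub: "E2 \<subseteq> {e. e \<subseteq> V \<and> card e = 2}" using sg unfolding simple_graph_def by blast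
  have EV: "\<forall>e\<in>E2. e \<subseteq> V" using sub by blast
  have finE: "finite E2" using finite_subset[of E2 "Pow V"] sub finV by blast
  obtain f where f: "bij_betw f V {0..<card V}" using ex_bij_betw_finite_nat[OF finV] by blast
  have inj: "inj_on f V" using f bij_betw_imp_inj_on by blast
  have fV: "f ` V = {0..<card V}" using f bij_betw_imp_surj_on by blast
  define E3 where "E3 = (`) f ` E2"
  have cg: "c_graph r k F E3 = c_graph r k F E2" unfolding E3_def by (rule iso_card[OF inj EV k finE])
  have sg3: "simple_graph {0..<card V} E3" unfolding simple_graph_def
  proof
    show "finite {0..<card V}" by simp
    show "E3 \<subseteq> {e. e \<subseteq> {0..<card V} \<and> card e = 2}"
    proof
      fix e3 assume "e3 \<in> E3"
      then obtain e where e: "e \<in> E2" "e3 = f ` e" unfolding E3_def by blast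
      have eV: "e \<subseteq> V" using e(1) EV by blast
      then have "e3 \<subseteq> {0..<card V}" using e(2) fV by blast
      moreover have "card e3 = card e" unfolding e(2) using inj_on_subset[OF inj eV] by (rule card_image)
      moreover have "card e = 2" using sub e(1) by blast
      ultimately show "e3 \<in> {e. e \<subseteq> {0..<card V} \<and> card e = 2}" by simp
    qed
  qed
  let ?S = "{c_graph r k F E | E :: nat set set. simple_graph {0..<card V} E}"
  have "?S \<subseteq> (c_graph r k F) ` Pow (Pow {0..<card V})" unfolding simple_graph_def by blast
  then have finS: "finite ?S" by (rule finite_subset) simp
  have "c_graph r k F E3 \<in> ?S" using sg3 by blast
  then have "c_graph r k F E3 \<le> Max ?S" using finS by (intro Max_ge) 
  then show ?thesis unfolding c_num_def cg .
qed

lemma twin_simple: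
  assumes sg: "simple_graph V E" and uv: "u \<noteq> v" "{u, v} \<notin> E" "v \<in> V"
  shows "simple_graph V (twin_replace E u v)"
proof -
  have finV: "finite V" and sub: "E \<subseteq> {e. e \<subseteq> V \<and> card e = 2}" using sg unfolding simple_graph_def by blast+
  have c2: "\<forall>e\<in>E. card e = 2" using sub by blast
  have finE: "finite E" using finite_subset[of E "Pow V"] sub finV by blast
  have "\<forall>e\<in>twin_replace E u v. card e = 2" by (rule twin_lemma(4)[OF uv(1,2) c2 finE order_refl])
  moreover have "\<forall>e\<in>twin_replace E u v. e \<subseteq> V"
  proof
    fix e assume "e \<in> twin_replace E u v"
    then have "e \<in> E \<or> (\<exists>x. e = {v,x} \<and> {u,x} \<in> E)" unfolding twin_replace_def by blast
    then show "e \<subseteq> V"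
    proof
      assume "e \<in> E" then show ?thesis using sub by blast
    next
      assume "\<exists>x. e = {v,x} \<and> {u,x} \<in> E"
      then obtain x where x: "e = {v,x}" "{u,x} \<in> E" by blast
      then have "x \<in> V" using sub by blast
      then show ?thesis using x uv(3) by blast
    qed
  qed
  ultimately show ?thesis unfolding simple_graph_def using finV by blast
qed

lemma two_ab: "2 * (a * b) \<le> a * a + b * (b::nat)"
proof -
  have "0 \<le> (int a - int b) * (int a - int b)" by simp
  then have "2 * (int a * int b) \<le> int a * int a + int b * int b" by (simp add: algebra_simps)
  then show ?thesis by (metis of_nat_le_iff of_nat_add of_nat_mult of_nat_numeral)
qed

theorem corollary2p9:
  fixes r k :: nat and F :: "nat set \<Rightarrow> nat" and V :: "'a set" and E :: "'a set set" and u v :: 'a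
  assumes "r \<ge> 2" and "k \<ge> 3"
    and "pattern_coloring r k F"
    and "extremal r k F V E"
    and "u \<in> V" and "v \<in> V" and "u \<noteq> v" and "{u, v} \<notin> E"
  shows "extremal r k F V (twin_replace E u v)"
proof -
  have k: "k \<ge> 2" using assms(2) by simp
  have sg: "simple_graph V E" and eqN: "c_graph r k F E = c_num r k F (card V)"
    using assms(4) unfolding extremal_def by blast+
  have uv: "u \<noteq> v" "{u, v} \<notin> E" using assms(7,8) by blast+
  have vu: "v \<noteq> u" "{v, u} \<notin> E" using assms(7,8) by (blast, simp add: insert_commute)
  have finV: "finite V" and sub: "E \<subseteq> {e. e \<subseteq> V \<and> card e = 2}" using sg unfolding simple_graph_def by blast+
  have c2: "\<forall>e\<in>E. card e = 2" using sub by blast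
  have finE: "finite E" using finite_subset[of E "Pow V"] sub finV by blast
  define E1 where "E1 = twin_replace E u v"
  define E2 where "E2 = twin_replace E v u"
  define E0 where "E0 = {e\<in>E. u \<notin> e \<and> v \<notin> e}"
  define C where "C = E0 \<rightarrow>\<^sub>E {1..r}"
  define a where "a = (\<lambda>\<chi>. card (fib E0 (free_colorings r k F (Dl v E)) \<chi>))"
  define b where "b = (\<lambda>\<chi>. card (fib E0 (free_colorings r k F (Dl u E)) \<chi>))"
  have sg1: "simple_graph V E1" unfolding E1_def by (rule twin_simple[OF sg uv assms(6)])
  have sg2: "simple_graph V E2" unfolding E2_def by (rule twin_simple[OF sg vu assms(5)])
  have cE: "c_graph r k F E = (\<Sum>\<chi>\<in>C. a \<chi> * b \<chi>)"
    unfolding C_def a_def b_def E0_def by (rule count_lemma[OF uv c2 finE])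
  have t1: "Dl v E1 = Dl v E" "{e\<in>E1. u \<notin> e \<and> v \<notin> e} = E0" "{u, v} \<notin> E1"
      "\<forall>e\<in>E1. card e = 2" "finite E1"
      "\<And>\<chi>. card (fib E0 (free_colorings r k F (Dl u E1)) \<chi>) = a \<chi>"
    unfolding E1_def E0_def a_def using twin_lemma[OF uv c2 finE k] by blast+
  have cE1: "c_graph r k F E1 = (\<Sum>\<chi>\<in>C. a \<chi> * a \<chi>)"
  proof -
    have "c_graph r k F E1 = (\<Sum>\<chi>\<in>{e\<in>E1. u \<notin> e \<and> v \<notin> e} \<rightarrow>\<^sub>E {1..r}.
     card (fib {e\<in>E1. u \<notin> e \<and> v \<notin> e} (free_colorings r k F (Dl v E1)) \<chi>) *
     card (fib {e\<in>E1. u \<notin> e \<and> v \<notin> e} (free_colorings r k F (Dl u E1)) \<chi>))"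
      by (rule count_lemma[OF uv(1) t1(3) t1(4) t1(5)])
    also have "\<dots> = (\<Sum>\<chi>\<in>C. a \<chi> * a \<chi>)"
      unfolding t1(1) t1(2) t1(6) C_def a_def ..
    finally show ?thesis .
  qed
  have E0': "{e\<in>E. v \<notin> e \<and> u \<notin> e} = E0" unfolding E0_def by blast
  have t2: "Dl u E2 = Dl u E" "{e\<in>E2. v \<notin> e \<and> u \<notin> e} = E0" "{v, u} \<notin> E2"
      "\<forall>e\<in>E2. card e = 2" "finite E2"
      "\<And>\<chi>. card (fib E0 (free_colorings r k F (Dl v E2)) \<chi>) = b \<chi>"
    unfolding E2_def b_def E0'[symmetric] using twin_lemma[OF vu c2 finE k] by blast+
  have cE2: "c_graph r k F E2 = (\<Sum>\<chi>\<in>C. b \<chi> * b \<chi>)"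
  proof -
    have "c_graph r k F E2 = (\<Sum>\<chi>\<in>{e\<in>E2. v \<notin> e \<and> u \<notin> e} \<rightarrow>\<^sub>E {1..r}.
     card (fib {e\<in>E2. v \<notin> e \<and> u \<notin> e} (free_colorings r k F (Dl u E2)) \<chi>) *
     card (fib {e\<in>E2. v \<notin> e \<and> u \<notin> e} (free_colorings r k F (Dl v E2)) \<chi>))"
      by (rule count_lemma[OF vu(1) t2(3) t2(4) t2(5)])
    also have "\<dots> = (\<Sum>\<chi>\<in>C. b \<chi> * b \<chi>)"
      unfolding t2(1) t2(2) t2(6) C_def b_def by (simp add: mult.commute)
    finally show ?thesis .
  qed
  have le1: "c_graph r k F E1 \<le> c_num r k F (card V)" by (rule le_cnum[OF sg1 k])
  have le2: "c_graph r k F E2 \<le> c_num r k F (card V)" by (rule le_cnum[OF sg2 k])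
  have "(\<Sum>\<chi>\<in>C. 2 * (a \<chi> * b \<chi>)) \<le> (\<Sum>\<chi>\<in>C. a \<chi> * a \<chi> + b \<chi> * b \<chi>)"
    by (rule sum_mono) (rule two_ab)
  then have "2 * (\<Sum>\<chi>\<in>C. a \<chi> * b \<chi>) \<le> (\<Sum>\<chi>\<in>C. a \<chi> * a \<chi>) + (\<Sum>\<chi>\<in>C. b \<chi> * b \<chi>)"
    by (simp add: sum_distrib_left sum.distrib)
  then have "c_graph r k F E1 = c_num r k F (card V)"
    using cE cE1 cE2 le1 le2 eqN by linarith
  then show ?thesis unfolding extremal_def E1_def[symmetric] using sg1 by blast
qed

end
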